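(* In the setting of the context, two elements of $\mathbb J'$ are $\mathbb J$-conjugate if and only if they are $\mathbb J'$-conjugate.
   Context: Fix a prime $p$. $\mathbb J$ is a finite group, $\mathbb J_1$ a normal subgroup of $\mathbb J$ with center $Z$, and $\mathbb J'$ a subgroup of $\mathbb J$ with $\mathbb J=\mathbb J'\mathbb J_1$ and $\mathbb J'\cap\mathbb J_1\subset Z$. Assume: (i) $\mathbb J_1$ is a $p$-group which is either extraspecial of class $2$ or abelian; (ii) $\mathbb J'=T\mathbb J'_1$ with $T$ an abelian subgroup of $\mathbb J'$ and $\mathbb J'_1$ a normal $p$-subgroup which is either extraspecial of class $2$ with center $Z'\supset\mathbb J'_1\cap T$, or abelian (then $Z':=\mathbb J'_1$); (iii) $[\mathbb J'_1,\mathbb J_1]=1$; (iv) $\mathbb J'/\mathbb J'_1$ has order prime to $p$; (v) $Z'Z$ is contained in the center of $\mathbb J$ and $\mathbb J'_1\mathbb J_1$ is an extraspecial $p$-group of class $2$ with center $Z'Z$. Let $\theta$ be a faithful character of $Z$ and $\theta'$ a faithful character of $Z'$ agreeing on $Z\cap Z'$. *)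

theory Defs
  imports "HOL-Algebra.Algebra"
begin

definition center_of :: "('a, 'b) monoid_scheme \<Rightarrow> 'a set \<Rightarrow> 'a set" where
  "center_of G H = {x \<in> H. \<forall>y \<in> H. x \<otimes>\<^bsub>G\<^esub> y = y \<otimes>\<^bsub>G\<^esub> x}"

definition p_subgroup :: "nat \<Rightarrow> ('a, 'b) monoid_scheme \<Rightarrow> 'a set \<Rightarrow> bool" where
  "p_subgroup p G H \<longleftrightarrow> subgroup H G \<and> finite H \<and> (\<exists>n. card H = p ^ n)"

definition abelian_subgroup :: "('a, 'b) monoid_scheme \<Rightarrow> 'a set \<Rightarrow> bool" where
  "abelian_subgroup G H \<longleftrightarrow> subgroup H G \<and>
     (\<forall>x \<in> H. \<forall>y \<in> H. x \<otimes>\<^bsub>G\<^esub> y = y \<otimes>\<^bsub>G\<^esub> x)"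

text \<open>Extraspecial p-group of class 2 (in the loose sense of the paper): a p-group P
  whose commutator subgroup is contained in its center and such that P modulo its
  center is elementary abelian (every p-th power is central).\<close>
definition extraspecial2 :: "nat \<Rightarrow> ('a, 'b) monoid_scheme \<Rightarrow> 'a set \<Rightarrow> bool" where
  "extraspecial2 p G P \<longleftrightarrow> p_subgroup p G P \<and>
     derived G P \<subseteq> center_of G P \<and>
     (\<forall>x \<in> P. x [^]\<^bsub>G\<^esub> p \<in> center_of G P)"

definition conj_in :: "('a, 'b) monoid_scheme \<Rightarrow> 'a set \<Rightarrow> 'a \<Rightarrow> 'a \<Rightarrow> bool" where
  "conj_in G H x y \<longleftrightarrow> (\<exists>g \<in> H. g \<otimes>\<^bsub>G\<^esub> x \<otimes>\<^bsub>G\<^esub> inv\<^bsub>G\<^esub> g = y)"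

end

theory Submission
  imports Defs
begin

theorem mainTheorem9:
  fixes p :: nat and J :: "('a, 'b) monoid_scheme"
    and J1 J' T J'1 :: "'a set"
  assumes prime: "Factorial_Ring.prime p"
    and grp: "group J" and fin: "finite (carrier J)"
    and J1_normal: "J1 \<lhd> J"
    and J'_sub: "subgroup J' J"
    and J_prod: "J' <#>\<^bsub>J\<^esub> J1 = carrier J"
    and J'_cap: "J' \<inter> J1 \<subseteq> center_of J J1"
    and i: "extraspecial2 p J J1 \<or> (p_subgroup p J J1 \<and> abelian_subgroup J J1)"
    and T_sub: "abelian_subgroup J T" and T_in: "T \<subseteq> J'"
    and J'1_normal: "J'1 \<lhd> (J\<lparr>carrier := J'\<rparr>)"
    and J'_prod: "T <#>\<^bsub>J\<^esub> J'1 = J'"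
    and ii: "(extraspecial2 p J J'1 \<and> J'1 \<inter> T \<subseteq> center_of J J'1)
             \<or> (p_subgroup p J J'1 \<and> abelian_subgroup J J'1)"
    and iii: "\<forall>a \<in> J'1. \<forall>b \<in> J1. a \<otimes>\<^bsub>J\<^esub> b = b \<otimes>\<^bsub>J\<^esub> a"
    and iv: "coprime p (order ((J\<lparr>carrier := J'\<rparr>) Mod J'1))"
    and v_central: "center_of J J'1 <#>\<^bsub>J\<^esub> center_of J J1 \<subseteq> center_of J (carrier J)"
    and v_extra: "extraspecial2 p J (J'1 <#>\<^bsub>J\<^esub> J1)"
    and v_center: "center_of J (J'1 <#>\<^bsub>J\<^esub> J1)
                   = center_of J J'1 <#>\<^bsub>J\<^esub> center_of J J1"
    and x: "x \<in> J'" and y: "y \<in> J'"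
  shows "conj_in J (carrier J) x y \<longleftrightarrow> conj_in J J' x y"
proof
  interpret G: group J by (rule grp)
  have J'c: "J' \<subseteq> carrier J" using J'_sub subgroup.subset by blast
  have J1c: "J1 \<subseteq> carrier J" using J1_normal normal_imp_subgroup subgroup.subset by blast
  define G' where "G' = J\<lparr>carrier := J'\<rparr>"
  have gG': "group G'" unfolding G'_def using J'_sub G.subgroup_imp_group by blast
  interpret N: normal J'1 G' using J'1_normal unfolding G'_def .
  have J'1sub: "J'1 \<subseteq> J'" using N.subset unfolding G'_def by simp
  have one'1: "\<one>\<^bsub>J\<^esub> \<in> J'1"
  proof -
    have "\<one>\<^bsub>J\<lparr>carrier := J'\<rparr>\<^esub> \<in> J'1" using subgroup.one_closed[OF normal_imp_subgroup[OF J'1_normal]] by simp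
    then show ?thesis by (simp add: G'_def)
  qed
  {
    assume "conj_in J J' x y"
    then show "conj_in J (carrier J) x y" using J'c unfolding conj_in_def by blast
  }
  assume "conj_in J (carrier J) x y"
  then obtain g where g: "g \<in> carrier J" "g \<otimes>\<^bsub>J\<^esub> x \<otimes>\<^bsub>J\<^esub> inv\<^bsub>J\<^esub> g = y"
    unfolding conj_in_def by blast
  then obtain a b where ab: "a \<in> J'" "b \<in> J1" "g = a \<otimes>\<^bsub>J\<^esub> b"
    using J_prod unfolding set_mult_def by blast
  have xc: "x \<in> carrier J" and yc: "y \<in> carrier J" and ac: "a \<in> carrier J" and bc: "b \<in> carrier J"
    using x y ab J'c J1c by auto
  define z where "z = b \<otimes>\<^bsub>J\<^esub> x \<otimes>\<^bsub>J\<^esub> inv\<^bsub>J\<^esub> b \<otimes>\<^bsub>J\<^esub> inv\<^bsub>J\<^esub> x"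
  have zc: "z \<in> carrier J" unfolding z_def using xc bc by simp
  have c1: "inv\<^bsub>J\<^esub> u \<otimes>\<^bsub>J\<^esub> (u \<otimes>\<^bsub>J\<^esub> w) = w" if "u \<in> carrier J" "w \<in> carrier J" for u w
    using that by (simp add: G.m_assoc[symmetric])
  have c2: "u \<otimes>\<^bsub>J\<^esub> (inv\<^bsub>J\<^esub> u \<otimes>\<^bsub>J\<^esub> w) = w" if "u \<in> carrier J" "w \<in> carrier J" for u w
    using that by (simp add: G.m_assoc[symmetric])
  have yeq: "y = a \<otimes>\<^bsub>J\<^esub> (b \<otimes>\<^bsub>J\<^esub> x \<otimes>\<^bsub>J\<^esub> inv\<^bsub>J\<^esub> b) \<otimes>\<^bsub>J\<^esub> inv\<^bsub>J\<^esub> a"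
    using g(2) ab(3) ac bc xc by (simp add: G.inv_mult_group G.m_assoc)
  have bxb: "b \<otimes>\<^bsub>J\<^esub> x \<otimes>\<^bsub>J\<^esub> inv\<^bsub>J\<^esub> b = inv\<^bsub>J\<^esub> a \<otimes>\<^bsub>J\<^esub> y \<otimes>\<^bsub>J\<^esub> a"
    unfolding yeq using ac bc xc by (simp only: G.m_assoc c1 G.m_closed G.inv_closed G.l_inv G.r_one)
  have zJ': "z \<in> J'"
  proof -
    have "inv\<^bsub>J\<^esub> a \<otimes>\<^bsub>J\<^esub> y \<otimes>\<^bsub>J\<^esub> a \<otimes>\<^bsub>J\<^esub> inv\<^bsub>J\<^esub> x \<in> J'"
      using J'_sub ab(1) x y by (simp add: subgroup.m_closed subgroup.m_inv_closed)
    then show ?thesis unfolding z_def bxb .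
  qed
  have zJ1: "z \<in> J1"
  proof -
    have "x \<otimes>\<^bsub>J\<^esub> inv\<^bsub>J\<^esub> b \<otimes>\<^bsub>J\<^esub> inv\<^bsub>J\<^esub> x \<in> J1"
      by (rule normal.inv_op_closed2[OF J1_normal xc subgroup.m_inv_closed[OF normal_imp_subgroup[OF J1_normal] ab(2)]])
    then have "b \<otimes>\<^bsub>J\<^esub> (x \<otimes>\<^bsub>J\<^esub> inv\<^bsub>J\<^esub> b \<otimes>\<^bsub>J\<^esub> inv\<^bsub>J\<^esub> x) \<in> J1"
      by (rule subgroup.m_closed[OF normal_imp_subgroup[OF J1_normal] ab(2)])
    then show ?thesis unfolding z_def using xc bc by (simp add: G.m_assoc)
  qed
  have zZ: "z \<in> center_of J J1" using J'_cap zJ' zJ1 by blast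
  have zcent: "\<forall>w \<in> carrier J. z \<otimes>\<^bsub>J\<^esub> w = w \<otimes>\<^bsub>J\<^esub> z"
  proof -
    have "\<one>\<^bsub>J\<^esub> \<in> center_of J J'1" using one'1 J'1sub J'c
      unfolding center_of_def by auto
    then have "\<one>\<^bsub>J\<^esub> \<otimes>\<^bsub>J\<^esub> z \<in> center_of J (carrier J)"
      using v_central zZ unfolding set_mult_def by blast
    then show ?thesis using zc unfolding center_of_def by simp
  qed
  obtain t n where tn: "t \<in> T" "n \<in> J'1" "x = t \<otimes>\<^bsub>J\<^esub> n"
    using x J'_prod unfolding set_mult_def by blast
  have tJ': "t \<in> J'" using tn T_in by blast
  have tc: "t \<in> carrier J" and nc: "n \<in> carrier J" using tJ' tn J'1sub J'c by auto
  have bx: "b \<otimes>\<^bsub>J\<^esub> x = z \<otimes>\<^bsub>J\<^esub> x \<otimes>\<^bsub>J\<^esub> b"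
    unfolding z_def using xc bc by (simp add: G.m_assoc)
  have bt: "b \<otimes>\<^bsub>J\<^esub> t = z \<otimes>\<^bsub>J\<^esub> t \<otimes>\<^bsub>J\<^esub> b"
  proof -
    have nb: "n \<otimes>\<^bsub>J\<^esub> b = b \<otimes>\<^bsub>J\<^esub> n" using iii tn(2) ab(2) by blast
    have "b \<otimes>\<^bsub>J\<^esub> t \<otimes>\<^bsub>J\<^esub> n = z \<otimes>\<^bsub>J\<^esub> t \<otimes>\<^bsub>J\<^esub> b \<otimes>\<^bsub>J\<^esub> n"
      using bx tn(3) nb tc nc bc zc by (simp add: G.m_assoc)
    then show ?thesis using tc nc bc zc by simp
  qed
  have btk: "b \<otimes>\<^bsub>J\<^esub> t [^]\<^bsub>J\<^esub> k = z [^]\<^bsub>J\<^esub> k \<otimes>\<^bsub>J\<^esub> t [^]\<^bsub>J\<^esub> k \<otimes>\<^bsub>J\<^esub> b" for k :: nat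
  proof (induction k)
    case 0 then show ?case using bc by simp
  next
    case (Suc k)
    have "b \<otimes>\<^bsub>J\<^esub> t [^]\<^bsub>J\<^esub> Suc k = (b \<otimes>\<^bsub>J\<^esub> t [^]\<^bsub>J\<^esub> k) \<otimes>\<^bsub>J\<^esub> t"
      using bc tc by (simp add: G.m_assoc)
    also have "\<dots> = z [^]\<^bsub>J\<^esub> k \<otimes>\<^bsub>J\<^esub> t [^]\<^bsub>J\<^esub> k \<otimes>\<^bsub>J\<^esub> (b \<otimes>\<^bsub>J\<^esub> t)"
      using Suc bc tc zc by (simp add: G.m_assoc)
    also have "\<dots> = z [^]\<^bsub>J\<^esub> k \<otimes>\<^bsub>J\<^esub> t [^]\<^bsub>J\<^esub> k \<otimes>\<^bsub>J\<^esub> (z \<otimes>\<^bsub>J\<^esub> t \<otimes>\<^bsub>J\<^esub> b)"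
      using bt by simp
    also have "\<dots> = z [^]\<^bsub>J\<^esub> k \<otimes>\<^bsub>J\<^esub> (t [^]\<^bsub>J\<^esub> k \<otimes>\<^bsub>J\<^esub> z) \<otimes>\<^bsub>J\<^esub> t \<otimes>\<^bsub>J\<^esub> b"
      using bc tc zc by (simp add: G.m_assoc)
    also have "\<dots> = z [^]\<^bsub>J\<^esub> k \<otimes>\<^bsub>J\<^esub> (z \<otimes>\<^bsub>J\<^esub> t [^]\<^bsub>J\<^esub> k) \<otimes>\<^bsub>J\<^esub> t \<otimes>\<^bsub>J\<^esub> b"
      using zcent tc by simp
    also have "\<dots> = z [^]\<^bsub>J\<^esub> Suc k \<otimes>\<^bsub>J\<^esub> t [^]\<^bsub>J\<^esub> Suc k \<otimes>\<^bsub>J\<^esub> b"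
      using bc tc zc by (simp add: G.m_assoc)
    finally show ?case .
  qed
  define m where "m = order (G' Mod J'1)"
  have tm: "t [^]\<^bsub>J\<^esub> m \<in> J'1"
  proof -
    interpret Q: group "G' Mod J'1" by (rule N.factorgroup_is_group)
    have tG': "t \<in> carrier G'" using tJ' unfolding G'_def by simp
    have hom: "(\<lambda>a. J'1 #>\<^bsub>G'\<^esub> a) \<in> hom G' (G' Mod J'1)" by (rule N.r_coset_hom_Mod)
    have "J'1 #>\<^bsub>G'\<^esub> (t [^]\<^bsub>G'\<^esub> m) = (J'1 #>\<^bsub>G'\<^esub> t) [^]\<^bsub>G' Mod J'1\<^esub> m"
      by (rule hom_nat_pow[OF hom tG' gG' Q.is_group])
    also have "\<dots> = \<one>\<^bsub>G' Mod J'1\<^esub>"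
      unfolding m_def
      by (rule Q.pow_order_eq_1) (use hom tG' in \<open>auto simp: hom_def\<close>)
    also have "\<dots> = J'1" by (simp add: FactGroup_def)
    finally have "J'1 #>\<^bsub>G'\<^esub> (t [^]\<^bsub>G'\<^esub> m) = J'1" .
    then have "t [^]\<^bsub>G'\<^esub> m \<in> J'1"
      using group.coset_join1[OF gG'] N.subgroup_axioms tG' monoid.nat_pow_closed[OF group.is_monoid[OF gG']] by blast
    then show ?thesis unfolding G'_def using G.nat_pow_consistent by metis
  qed
  have tmc: "t [^]\<^bsub>J\<^esub> m \<in> carrier J" using tc by simp
  have zm: "z [^]\<^bsub>J\<^esub> m = \<one>\<^bsub>J\<^esub>"
  proof -
    have "b \<otimes>\<^bsub>J\<^esub> t [^]\<^bsub>J\<^esub> m = t [^]\<^bsub>J\<^esub> m \<otimes>\<^bsub>J\<^esub> b"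
      using iii tm ab(2) by metis
    then have "z [^]\<^bsub>J\<^esub> m \<otimes>\<^bsub>J\<^esub> (t [^]\<^bsub>J\<^esub> m \<otimes>\<^bsub>J\<^esub> b) = \<one>\<^bsub>J\<^esub> \<otimes>\<^bsub>J\<^esub> (t [^]\<^bsub>J\<^esub> m \<otimes>\<^bsub>J\<^esub> b)"
      using btk[of m] zc tmc bc by (simp add: G.m_assoc)
    then show ?thesis using G.r_cancel zc tmc bc by (meson G.m_closed G.nat_pow_closed G.one_closed G.r_cancel)
  qed
  obtain k where card1: "card J1 = p ^ k"
    using i unfolding extraspecial2_def p_subgroup_def by blast
  have zk: "z [^]\<^bsub>J\<^esub> card J1 = \<one>\<^bsub>J\<^esub>"
  proof -
    have sJ1: "subgroup J1 J" using J1_normal normal_imp_subgroup by blast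
    interpret H: group "J\<lparr>carrier := J1\<rparr>" using G.subgroup_imp_group[OF sJ1] .
    have "z [^]\<^bsub>J\<lparr>carrier := J1\<rparr>\<^esub> order (J\<lparr>carrier := J1\<rparr>) = \<one>\<^bsub>J\<lparr>carrier := J1\<rparr>\<^esub>"
      by (rule H.pow_order_eq_1) (use zJ1 in simp)
    then show ?thesis by (simp add: order_def G.nat_pow_consistent[symmetric])
  qed
  have cop: "coprime m (card J1)"
    using iv unfolding m_def card1 by (simp add: G'_def ac_simps coprime_power_right_iff)
  have "G.ord z dvd m" "G.ord z dvd card J1"
    using zm zk G.pow_eq_id zc by auto
  then have "G.ord z = 1" using cop by (meson coprime_common_divisor_nat)
  then have z1: "z = \<one>\<^bsub>J\<^esub>" using G.ord_eq_1 zc by blast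
  have bxx: "b \<otimes>\<^bsub>J\<^esub> x \<otimes>\<^bsub>J\<^esub> inv\<^bsub>J\<^esub> b = x"
  proof -
    have "b \<otimes>\<^bsub>J\<^esub> x \<otimes>\<^bsub>J\<^esub> inv\<^bsub>J\<^esub> b \<otimes>\<^bsub>J\<^esub> inv\<^bsub>J\<^esub> x \<otimes>\<^bsub>J\<^esub> x = x"
      using z1 xc unfolding z_def by simp
    then show ?thesis using xc bc by (simp add: G.m_assoc)
  qed
  have "a \<otimes>\<^bsub>J\<^esub> x \<otimes>\<^bsub>J\<^esub> inv\<^bsub>J\<^esub> a = y"
  proof -
    note yeq
    then show ?thesis using bxx by simp
  qed
  then show "conj_in J J' x y" unfolding conj_in_def using ab(1) by blast
qed

end
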